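(* Let $P_{XY}$ be a probability measure on $\mathcal X\times\mathcal Y$ with $|\mathcal X|=M$, let $\mathcal L:\mathcal Y\to2^{\mathcal X}$ be a decision rule with $|\mathcal L(y)|\ge1$ for all $y$, and $P_{\mathcal L}:=\mathbb P[X\notin\mathcal L(Y)]$. Then for every $\gamma\ge1$, $$P_{\mathcal L}\ge\frac{1+\gamma}2-\frac{\gamma\,\mathbb E[|\mathcal L(Y)|]}M-\frac12\mathbb E\Big[\sum_{x\in\mathcal X}\Big|P_{X|Y}(x|Y)-\frac\gamma M\Big|\Big].$$ Moreover, let $\gamma\ge1$ with $|\mathcal L(y)|\le M/\gamma$ for all $y$, suppose for each $y$ the list consists of the $|\mathcal L(y)|$ most probable elements given $Y=y$, and let $x_\ell(y)$ be the $\ell$-th most probable element given $Y=y$ (ties broken arbitrarily). If there is $\alpha:\mathcal Y\to[0,1]$ with $\frac\gamma M\le\alpha(y)\le\frac1{|\mathcal L(y)|}$ for all $y$, such that $P_{X|Y}(x_\ell(y)|y)=\alpha(y)$ for $\ell\le|\mathcal L(y)|$ and $P_{X|Y}(x_\ell(y)|y)=\frac{1-\alpha(y)|\mathcal L(y)|}{M-|\mathcal L(y)|}$ for $|\mathcal L(y)|<\ell\le M$, then the bound holds with equality.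
   Context: $2^{\mathcal X}$ is the power set of $\mathcal X$; $P_{X|Y}$ is the conditional probability mass function of $X$ given $Y$. *)

theory Defs
  imports "HOL-Probability.Probability"
begin

text \<open>The joint law P_XY on X x Y (X finite) is represented by its disintegration:
  the marginal law PY of Y (a probability measure on Y) and the conditional pmf
  Pc y x = P_{X|Y}(x|y), measurable in y.\<close>

definition list_error :: "'y measure \<Rightarrow> ('y \<Rightarrow> 'x \<Rightarrow> real) \<Rightarrow> ('y \<Rightarrow> 'x set) \<Rightarrow> real" where
  "list_error PY Pc L = (\<integral>y. (\<Sum>x\<in>UNIV - L y. Pc y x) \<partial>PY)"

definition lower_bound13 ::
  "'y measure \<Rightarrow> ('y \<Rightarrow> 'x::finite \<Rightarrow> real) \<Rightarrow> ('y \<Rightarrow> 'x set) \<Rightarrow> real \<Rightarrow> real" where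
  "lower_bound13 PY Pc L \<gamma> =
     (1 + \<gamma>) / 2 - \<gamma> * (\<integral>y. real (card (L y)) \<partial>PY) / real CARD('x)
     - 1/2 * (\<integral>y. (\<Sum>x\<in>UNIV. \<bar>Pc y x - \<gamma> / real CARD('x)\<bar>) \<partial>PY)"

end

theory Submission
  imports Defs
begin

lemma pw:
  fixes p :: "'x::finite \<Rightarrow> real" and L :: "'x set" and \<gamma> :: real
  assumes s1: "(\<Sum>x\<in>UNIV. p x) = 1"
  shows "(1+\<gamma>)/2 - \<gamma> * real (card L) / real CARD('x) - 1/2 * (\<Sum>x\<in>UNIV. \<bar>p x - \<gamma>/real CARD('x)\<bar>) \<le> (\<Sum>x\<in>UNIV - L. p x)"
    and "(\<forall>x\<in>L. \<gamma>/real CARD('x) \<le> p x) \<Longrightarrow> (\<forall>x. x \<notin> L \<longrightarrow> p x \<le> \<gamma>/real CARD('x)) \<Longrightarrow>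
     (1+\<gamma>)/2 - \<gamma> * real (card L) / real CARD('x) - 1/2 * (\<Sum>x\<in>UNIV. \<bar>p x - \<gamma>/real CARD('x)\<bar>) = (\<Sum>x\<in>UNIV - L. p x)"
proof -
  define c where "c = \<gamma>/real CARD('x)"
  define M where "M = real CARD('x)"
  define K where "K = real (card L)"
  have Mpos: "M > 0" unfolding M_def by simp
  have cM: "c * M = \<gamma>" using Mpos unfolding c_def M_def by simp
  have Kc: "\<gamma> * K / M = K * c" unfolding c_def M_def K_def by simp
  have cardD: "real (card (UNIV - L)) = M - K"
    unfolding M_def K_def by (simp add: card_Diff_subset card_mono of_nat_diff)
  have sp: "(\<Sum>x\<in>UNIV. p x) = (\<Sum>x\<in>L. p x) + (\<Sum>x\<in>UNIV - L. p x)"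
    using sum.subset_diff[of L UNIV p] by simp
  have sa: "(\<Sum>x\<in>UNIV. \<bar>p x - c\<bar>) = (\<Sum>x\<in>L. \<bar>p x - c\<bar>) + (\<Sum>x\<in>UNIV - L. \<bar>p x - c\<bar>)"
    using sum.subset_diff[of L UNIV "\<lambda>x. \<bar>p x - c\<bar>"] by simp
  have e1: "(\<Sum>x\<in>L. p x - c) = (\<Sum>x\<in>L. p x) - K * c"
    by (simp add: sum_subtractf K_def)
  have e2: "(\<Sum>x\<in>UNIV - L. c - p x) = (M - K) * c - (\<Sum>x\<in>UNIV - L. p x)"
    by (simp add: sum_subtractf cardD)
  have h1: "(\<Sum>x\<in>L. p x - c) \<le> (\<Sum>x\<in>L. \<bar>p x - c\<bar>)" by (rule sum_mono) simp
  have h2: "(\<Sum>x\<in>UNIV - L. c - p x) \<le> (\<Sum>x\<in>UNIV - L. \<bar>p x - c\<bar>)" by (rule sum_mono) simp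
  have alg: "(M - K) * c = \<gamma> - K * c" using cM by (simp add: algebra_simps)
  show "(1+\<gamma>)/2 - \<gamma> * real (card L) / real CARD('x) - 1/2 * (\<Sum>x\<in>UNIV. \<bar>p x - \<gamma>/real CARD('x)\<bar>) \<le> (\<Sum>x\<in>UNIV - L. p x)"
  proof -
    have "(1+\<gamma>)/2 - \<gamma> * K / M - 1/2 * (\<Sum>x\<in>UNIV. \<bar>p x - c\<bar>) \<le> (\<Sum>x\<in>UNIV - L. p x)"
      using s1 sp sa e1 e2 h1 h2 alg Kc by (simp only: Kc) (simp add: field_simps; linarith)
    then show ?thesis unfolding c_def M_def K_def .
  qed
  assume a1: "\<forall>x\<in>L. \<gamma>/real CARD('x) \<le> p x" and a2: "\<forall>x. x \<notin> L \<longrightarrow> p x \<le> \<gamma>/real CARD('x)"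
  have q1: "(\<Sum>x\<in>L. p x - c) = (\<Sum>x\<in>L. \<bar>p x - c\<bar>)" by (rule sum.cong) (use a1 c_def in auto)
  have q2: "(\<Sum>x\<in>UNIV - L. c - p x) = (\<Sum>x\<in>UNIV - L. \<bar>p x - c\<bar>)" by (rule sum.cong) (use a2 c_def in auto)
  show "(1+\<gamma>)/2 - \<gamma> * real (card L) / real CARD('x) - 1/2 * (\<Sum>x\<in>UNIV. \<bar>p x - \<gamma>/real CARD('x)\<bar>) = (\<Sum>x\<in>UNIV - L. p x)"
  proof -
    have "(1+\<gamma>)/2 - \<gamma> * K / M - 1/2 * (\<Sum>x\<in>UNIV. \<bar>p x - c\<bar>) = (\<Sum>x\<in>UNIV - L. p x)"
      using s1 sp sa e1 e2 q1 q2 alg Kc by (simp only: Kc) (simp add: field_simps; linarith)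
    then show ?thesis unfolding c_def M_def K_def .
  qed
qed
theorem theorem13:
  fixes PY :: "'y measure" and Pc :: "'y \<Rightarrow> 'x::finite \<Rightarrow> real" and L :: "'y \<Rightarrow> 'x set"
  assumes "prob_space PY"
    and "\<And>x. (\<lambda>y. Pc y x) \<in> borel_measurable PY"
    and "\<And>y x. Pc y x \<ge> 0"
    and "\<And>y. (\<Sum>x\<in>UNIV. Pc y x) = 1"
    and "\<And>x. {y \<in> space PY. x \<in> L y} \<in> sets PY"
    and "\<And>y. card (L y) \<ge> 1"
  shows "(\<forall>\<gamma>::real. \<gamma> \<ge> 1 \<longrightarrow> list_error PY Pc L \<ge> lower_bound13 PY Pc L \<gamma>)
    \<and> (\<forall>(\<gamma>::real) (\<alpha>::'y \<Rightarrow> real).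
           \<gamma> \<ge> 1
         \<and> (\<forall>y. real (card (L y)) \<le> real CARD('x) / \<gamma>)
         \<and> (\<forall>y. 0 \<le> \<alpha> y \<and> \<alpha> y \<le> 1)
         \<and> (\<forall>y. \<gamma> / real CARD('x) \<le> \<alpha> y \<and> \<alpha> y \<le> 1 / real (card (L y)))
         \<and> (\<forall>y. \<exists>\<sigma> :: nat \<Rightarrow> 'x.
               bij_betw \<sigma> {1..CARD('x)} UNIV
             \<and> (\<forall>i j. 1 \<le> i \<and> i \<le> j \<and> j \<le> CARD('x) \<longrightarrow> Pc y (\<sigma> j) \<le> Pc y (\<sigma> i))
             \<and> L y = \<sigma> ` {1..card (L y)}
             \<and> (\<forall>l \<in> {1..card (L y)}. Pc y (\<sigma> l) = \<alpha> y)
             \<and> (\<forall>l \<in> {card (L y)<..CARD('x)}.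
                  Pc y (\<sigma> l) = (1 - \<alpha> y * real (card (L y))) / (real CARD('x) - real (card (L y)))))
         \<longrightarrow> list_error PY Pc L = lower_bound13 PY Pc L \<gamma>)"
proof -
  interpret prob_space PY by (rule assms(1))
  note meas = assms(2) and nonneg = assms(3) and sum1 = assms(4) and Ls = assms(5)
  define M where "M = real CARD('x)"
  have Mpos: "M > 0" unfolding M_def by simp
  have le1: "Pc y x \<le> 1" for y x
    using member_le_sum[of x UNIV "Pc y"] nonneg sum1 by simp
  have ind: "(\<lambda>y. if x \<in> L y then 1 else 0 :: real) \<in> borel_measurable PY" for x
    by (rule measurable_If[OF borel_measurable_const borel_measurable_const Ls])
  have indn: "(\<lambda>y. if x \<in> L y then 0 else 1 :: real) \<in> borel_measurable PY" for x
    by (rule measurable_If[OF borel_measurable_const borel_measurable_const Ls])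
  have cardeq: "real (card (L y)) = (\<Sum>x\<in>UNIV. if x \<in> L y then 1 else 0 :: real)" for y
    by (simp add: sum.If_cases)
  have Seq: "(\<Sum>x\<in>UNIV - L y. Pc y x) = (\<Sum>x\<in>UNIV. Pc y x * (if x \<in> L y then 0 else 1))" for y
  proof -
    have "(\<Sum>x\<in>UNIV. Pc y x * (if x \<in> L y then 0 else 1)) = (\<Sum>x\<in>UNIV. if x \<in> L y then 0 else Pc y x)"
      by (intro sum.cong) auto
    also have "\<dots> = (\<Sum>x\<in>UNIV - L y. Pc y x)"
      by (simp add: sum.If_cases Compl_eq_Diff_UNIV)
    finally show ?thesis by simp
  qed
  have mK: "(\<lambda>y. real (card (L y))) \<in> borel_measurable PY"
    unfolding cardeq by (intro borel_measurable_sum ind)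
  have mS: "(\<lambda>y. \<Sum>x\<in>UNIV - L y. Pc y x) \<in> borel_measurable PY"
    unfolding Seq by (intro borel_measurable_sum borel_measurable_times meas indn)
  have mA: "(\<lambda>y. \<Sum>x\<in>UNIV. \<bar>Pc y x - g\<bar>) \<in> borel_measurable PY" for g
    by (intro borel_measurable_sum borel_measurable_abs borel_measurable_diff meas borel_measurable_const)
  have cardle: "card (L y) \<le> CARD('x)" for y by (rule card_mono) auto
  have iK: "integrable PY (\<lambda>y. real (card (L y)))"
    by (rule integrable_const_bound[where B="real CARD('x)"]) (use cardle mK in auto)
  have Sb: "0 \<le> (\<Sum>x\<in>UNIV - L y. Pc y x)" "(\<Sum>x\<in>UNIV - L y. Pc y x) \<le> 1" for y
  proof -
    show "0 \<le> (\<Sum>x\<in>UNIV - L y. Pc y x)" by (intro sum_nonneg nonneg)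
    have "(\<Sum>x\<in>UNIV - L y. Pc y x) \<le> (\<Sum>x\<in>UNIV. Pc y x)"
      by (rule sum_mono2) (auto intro: nonneg)
    then show "(\<Sum>x\<in>UNIV - L y. Pc y x) \<le> 1" using sum1 by simp
  qed
  have iS: "integrable PY (\<lambda>y. \<Sum>x\<in>UNIV - L y. Pc y x)"
    by (rule integrable_const_bound[where B=1]) (use Sb mS in auto)
  have iA: "integrable PY (\<lambda>y. \<Sum>x\<in>UNIV. \<bar>Pc y x - g\<bar>)" for g
  proof (rule integrable_const_bound[where B="\<Sum>x\<in>(UNIV::'x set). 1 + \<bar>g\<bar>"])
    show "AE y in PY. norm (\<Sum>x\<in>UNIV. \<bar>Pc y x - g\<bar>) \<le> (\<Sum>x\<in>(UNIV::'x set). 1 + \<bar>g\<bar>)"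
    proof (intro AE_I2)
      fix y
      have "(\<Sum>x\<in>UNIV. \<bar>Pc y x - g\<bar>) \<le> (\<Sum>x\<in>(UNIV::'x set). 1 + \<bar>g\<bar>)"
      proof (intro sum_mono)
        fix x
        have "Pc y x \<le> 1" "0 \<le> Pc y x" by (rule le1, rule nonneg)
        then show "\<bar>Pc y x - g\<bar> \<le> 1 + \<bar>g\<bar>" by linarith
      qed
      moreover have "0 \<le> (\<Sum>x\<in>UNIV. \<bar>Pc y x - g\<bar>)" by (intro sum_nonneg) simp
      ultimately show "norm (\<Sum>x\<in>UNIV. \<bar>Pc y x - g\<bar>) \<le> (\<Sum>x\<in>(UNIV::'x set). 1 + \<bar>g\<bar>)" by simp
    qed
  qed (rule mA)
  have LB: "lower_bound13 PY Pc L \<gamma> = (\<integral>y. (1+\<gamma>)/2 - \<gamma> * real (card (L y)) / real CARD('x)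
      - 1/2 * (\<Sum>x\<in>UNIV. \<bar>Pc y x - \<gamma>/real CARD('x)\<bar>) \<partial>PY)" for \<gamma>
  proof -
    have i2: "integrable PY (\<lambda>y. \<gamma> * real (card (L y)) / real CARD('x))"
      by (intro integrable_divide integrable_mult_right iK)
    have i1: "integrable PY (\<lambda>y. (1+\<gamma>)/2 - \<gamma> * real (card (L y)) / real CARD('x))"
      by (rule Bochner_Integration.integrable_diff[OF integrable_const i2])
    have i3: "integrable PY (\<lambda>y. 1/2 * (\<Sum>x\<in>UNIV. \<bar>Pc y x - \<gamma>/real CARD('x)\<bar>))"
      by (intro integrable_mult_right iA)
    have "(\<integral>y. (1+\<gamma>)/2 - \<gamma> * real (card (L y)) / real CARD('x)
      - 1/2 * (\<Sum>x\<in>UNIV. \<bar>Pc y x - \<gamma>/real CARD('x)\<bar>) \<partial>PY)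
      = (\<integral>y. (1+\<gamma>)/2 - \<gamma> * real (card (L y)) / real CARD('x) \<partial>PY)
       - (\<integral>y. 1/2 * (\<Sum>x\<in>UNIV. \<bar>Pc y x - \<gamma>/real CARD('x)\<bar>) \<partial>PY)"
      by (rule Bochner_Integration.integral_diff[OF i1 i3])
    also have "(\<integral>y. (1+\<gamma>)/2 - \<gamma> * real (card (L y)) / real CARD('x) \<partial>PY)
       = (\<integral>y. (1+\<gamma>)/2 \<partial>PY) - (\<integral>y. \<gamma> * real (card (L y)) / real CARD('x) \<partial>PY)"
      by (rule Bochner_Integration.integral_diff[OF integrable_const i2])
    finally show ?thesis unfolding lower_bound13_def by (simp add: prob_space)
  qed
  have pt: "(1+\<gamma>)/2 - \<gamma> * real (card (L y)) / real CARD('x)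
      - 1/2 * (\<Sum>x\<in>UNIV. \<bar>Pc y x - \<gamma>/real CARD('x)\<bar>) \<le> (\<Sum>x\<in>UNIV - L y. Pc y x)" for y \<gamma>
    by (rule pw(1)) (rule sum1)
  show ?thesis
  proof (intro conjI allI impI)
    fix \<gamma> :: real
    show "list_error PY Pc L \<ge> lower_bound13 PY Pc L \<gamma>"
      unfolding LB list_error_def
      by (intro integral_mono iS pt) (use iK iA in auto)
  next
    fix \<gamma> :: real and \<alpha> :: "'y \<Rightarrow> real"
    assume H: "\<gamma> \<ge> 1
         \<and> (\<forall>y. real (card (L y)) \<le> real CARD('x) / \<gamma>)
         \<and> (\<forall>y. 0 \<le> \<alpha> y \<and> \<alpha> y \<le> 1)
         \<and> (\<forall>y. \<gamma> / real CARD('x) \<le> \<alpha> y \<and> \<alpha> y \<le> 1 / real (card (L y)))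
         \<and> (\<forall>y. \<exists>\<sigma> :: nat \<Rightarrow> 'x.
               bij_betw \<sigma> {1..CARD('x)} UNIV
             \<and> (\<forall>i j. 1 \<le> i \<and> i \<le> j \<and> j \<le> CARD('x) \<longrightarrow> Pc y (\<sigma> j) \<le> Pc y (\<sigma> i))
             \<and> L y = \<sigma> ` {1..card (L y)}
             \<and> (\<forall>l \<in> {1..card (L y)}. Pc y (\<sigma> l) = \<alpha> y)
             \<and> (\<forall>l \<in> {card (L y)<..CARD('x)}.
                  Pc y (\<sigma> l) = (1 - \<alpha> y * real (card (L y))) / (real CARD('x) - real (card (L y)))))"
    have g1: "\<gamma> \<ge> 1" using H by blast
    have eq: "(1+\<gamma>)/2 - \<gamma> * real (card (L y)) / real CARD('x)
      - 1/2 * (\<Sum>x\<in>UNIV. \<bar>Pc y x - \<gamma>/real CARD('x)\<bar>) = (\<Sum>x\<in>UNIV - L y. Pc y x)" for y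
    proof (rule pw(2)[OF sum1])
      have al: "\<gamma> / real CARD('x) \<le> \<alpha> y" using H by blast
      obtain \<sigma> :: "nat \<Rightarrow> 'x" where bij: "bij_betw \<sigma> {1..CARD('x)} UNIV"
        and Ly: "L y = \<sigma> ` {1..card (L y)}"
        and top: "\<forall>l \<in> {1..card (L y)}. Pc y (\<sigma> l) = \<alpha> y"
        and bot: "\<forall>l \<in> {card (L y)<..CARD('x)}.
                  Pc y (\<sigma> l) = (1 - \<alpha> y * real (card (L y))) / (real CARD('x) - real (card (L y)))"
        using H by metis
      show "\<forall>x\<in>L y. \<gamma> / real CARD('x) \<le> Pc y x"
      proof
        fix x assume "x \<in> L y"
        then obtain l where "l \<in> {1..card (L y)}" "x = \<sigma> l" using Ly by blast
        then show "\<gamma> / real CARD('x) \<le> Pc y x" using top al by simp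
      qed
      show "\<forall>x. x \<notin> L y \<longrightarrow> Pc y x \<le> \<gamma> / real CARD('x)"
      proof (intro allI impI)
        fix x assume xn: "x \<notin> L y"
        have "x \<in> \<sigma> ` {1..CARD('x)}" using bij by (simp add: bij_betw_def)
        then obtain l where l: "l \<in> {1..CARD('x)}" "x = \<sigma> l" by blast
        with xn Ly have "l \<notin> {1..card (L y)}" by blast
        with l have "l \<in> {card (L y)<..CARD('x)}" by auto
        with bot l have px: "Pc y x = (1 - \<alpha> y * real (card (L y))) / (real CARD('x) - real (card (L y)))" by simp
        define K where "K = real (card (L y))"
        have KM: "K \<le> M" using cardle[of y] unfolding K_def M_def by simp
        have aM: "\<gamma> \<le> \<alpha> y * M" using al Mpos unfolding M_def by (simp add: field_simps)
        show "Pc y x \<le> \<gamma> / real CARD('x)"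
        proof (cases "K = M")
          case True
          then show ?thesis using px g1 Mpos unfolding K_def M_def by simp
        next
          case False
          with KM have pos: "M - K > 0" by simp
          have K0: "K \<ge> 0" unfolding K_def by simp
          have "(1 - \<alpha> y * K) * M \<le> \<gamma> * (M - K)"
          proof -
            have "(1 - \<alpha> y * K) * M = M - K * (\<alpha> y * M)" by (simp add: algebra_simps)
            also have "\<dots> \<le> M - K * \<gamma>" using mult_left_mono[OF aM K0] by simp
            also have "\<dots> \<le> \<gamma> * M - K * \<gamma>" using g1 Mpos mult_right_mono[OF g1, of M] by simp
            finally show ?thesis by (simp add: algebra_simps)
          qed
          then have "(1 - \<alpha> y * K) / (M - K) \<le> \<gamma> / M" using pos Mpos by (simp add: field_simps)
          then show ?thesis using px unfolding K_def M_def by simp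
        qed
      qed
    qed
    show "list_error PY Pc L = lower_bound13 PY Pc L \<gamma>"
      unfolding LB list_error_def by (rule Bochner_Integration.integral_cong[OF refl]) (rule eq[symmetric])
  qed
qed

end
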